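(* Let $p,q$ be distributions on $[n]$, $0<\varepsilon\leq1$, and $m_1\geq m_2>0$. Let $S_1$ consist of $\mathrm{Poi}(m_1)$ i.i.d. samples from $p$ and $T_1$ of $\mathrm{Poi}(m_2)$ i.i.d. samples from $q$, independent. Let $b=\frac{256\log n}{\varepsilon^2m_2}$, $b'=\frac{256\log n}{m_2}$, let $X^{S_1}_i,Y^{T_1}_i$ be the numbers of occurrences of $i$ in $S_1,T_1$, and define $B=\{i: X^{S_1}_i/m_1>b\}\cup\{i:Y^{T_1}_i/m_2>b\}$, $M=\{i: b'\leq\max\{X^{S_1}_i/m_1,Y^{T_1}_i/m_2\}\leq b\}$, $H=[n]\setminus(B\cup M)$. Then with probability $1-o(1/n)$ over $S_1,T_1$, the sets $B$, $M$ and $H$ are all faithful.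
   Context: "Drawing $\mathrm{Poi}(m)$ samples" means drawing $N\sim\mathrm{Poisson}(m)$ then $N$ i.i.d. samples. $B$ is faithful if every $i\in B$ has $p_i>b/2$ or $q_i>b/2$; $M$ is faithful if every $i\in M$ has $b'/2\leq\max\{p_i,q_i\}\leq2b$; $H$ is faithful if every $i\in H$ has $p_i<2b'$ and $q_i<2b'$. *)

theory Defs
  imports "HOL-Probability.Probability"
begin

definition distr_on :: "nat \<Rightarrow> nat pmf \<Rightarrow> bool" where
  "distr_on n p \<longleftrightarrow> set_pmf p \<subseteq> {1..n}"

definition poi_samples :: "real \<Rightarrow> 'a pmf \<Rightarrow> 'a list pmf" where
  "poi_samples m p = bind_pmf (poisson_pmf m) (\<lambda>N. replicate_pmf N p)"

definition thr_b :: "nat \<Rightarrow> real \<Rightarrow> real \<Rightarrow> real" where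
  "thr_b n \<epsilon> m2 = 256 * ln (real n) / (\<epsilon>\<^sup>2 * m2)"

definition thr_b' :: "nat \<Rightarrow> real \<Rightarrow> real" where
  "thr_b' n m2 = 256 * ln (real n) / m2"

definition setB :: "nat \<Rightarrow> real \<Rightarrow> real \<Rightarrow> real \<Rightarrow> nat list \<Rightarrow> nat list \<Rightarrow> nat set" where
  "setB n \<epsilon> m1 m2 S T =
     {i \<in> {1..n}. real (count_list S i) / m1 > thr_b n \<epsilon> m2}
   \<union> {i \<in> {1..n}. real (count_list T i) / m2 > thr_b n \<epsilon> m2}"

definition setM :: "nat \<Rightarrow> real \<Rightarrow> real \<Rightarrow> real \<Rightarrow> nat list \<Rightarrow> nat list \<Rightarrow> nat set" where
  "setM n \<epsilon> m1 m2 S T =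
     {i \<in> {1..n}. thr_b' n m2 \<le> max (real (count_list S i) / m1) (real (count_list T i) / m2)
                 \<and> max (real (count_list S i) / m1) (real (count_list T i) / m2) \<le> thr_b n \<epsilon> m2}"

definition setH :: "nat \<Rightarrow> real \<Rightarrow> real \<Rightarrow> real \<Rightarrow> nat list \<Rightarrow> nat list \<Rightarrow> nat set" where
  "setH n \<epsilon> m1 m2 S T = {1..n} - (setB n \<epsilon> m1 m2 S T \<union> setM n \<epsilon> m1 m2 S T)"

definition B_faithful :: "nat pmf \<Rightarrow> nat pmf \<Rightarrow> real \<Rightarrow> nat set \<Rightarrow> bool" where
  "B_faithful p q b B \<longleftrightarrow> (\<forall>i\<in>B. pmf p i > b / 2 \<or> pmf q i > b / 2)"

definition M_faithful :: "nat pmf \<Rightarrow> nat pmf \<Rightarrow> real \<Rightarrow> real \<Rightarrow> nat set \<Rightarrow> bool" where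
  "M_faithful p q b b' M \<longleftrightarrow>
     (\<forall>i\<in>M. b' / 2 \<le> max (pmf p i) (pmf q i) \<and> max (pmf p i) (pmf q i) \<le> 2 * b)"

definition H_faithful :: "nat pmf \<Rightarrow> nat pmf \<Rightarrow> real \<Rightarrow> nat set \<Rightarrow> bool" where
  "H_faithful p q b' H \<longleftrightarrow> (\<forall>i\<in>H. pmf p i < 2 * b' \<and> pmf q i < 2 * b')"

end

theory Submission
  imports Defs
begin

lemma nn_ind_pt:
  assumes "t \<ge> 0"
  shows "(\<integral>\<^sup>+x. ennreal (if x = i then t else 1) \<partial>measure_pmf p) = ennreal (1 - pmf p i + pmf p i * t)"
proof -
  have "(\<lambda>x. ennreal (if x = i then t else 1)) = (\<lambda>x. ennreal t * indicator {i} x + indicator (-{i}) x)"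
    by (auto simp: indicator_def)
  hence "(\<integral>\<^sup>+x. ennreal (if x = i then t else 1) \<partial>measure_pmf p)
       = ennreal t * emeasure (measure_pmf p) {i} + emeasure (measure_pmf p) (-{i})"
    by (simp add: nn_integral_add nn_integral_cmult)
  also have "\<dots> = ennreal (t * pmf p i) + ennreal (1 - pmf p i)"
  proof -
    have "measure_pmf.prob p (-{i}) = 1 - pmf p i"
      using measure_pmf.prob_compl[of "{i}" p] by (simp add: measure_pmf_single Compl_eq_Diff_UNIV)
    then show ?thesis using assms
      by (simp add: measure_pmf.emeasure_eq_measure measure_pmf_single ennreal_mult)
  qed
  also have "\<dots> = ennreal (1 - pmf p i + pmf p i * t)"
    using assms by (subst ennreal_plus[symmetric]) (auto simp: pmf_le_1 algebra_simps)
  finally show ?thesis .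
qed

lemma mgf_rep:
  assumes "t \<ge> 0"
  shows "(\<integral>\<^sup>+ xs. ennreal (t ^ count_list xs i) \<partial>replicate_pmf N p) = ennreal ((1 - pmf p i + pmf p i * t) ^ N)"
proof (induction N)
  case 0
  then show ?case by simp
next
  case (Suc N)
  have "(\<integral>\<^sup>+ xs. ennreal (t ^ count_list xs i) \<partial>replicate_pmf (Suc N) p)
     = (\<integral>\<^sup>+x. (\<integral>\<^sup>+xs. ennreal (if x = i then t else 1) * ennreal (t ^ count_list xs i) \<partial>replicate_pmf N p) \<partial>p)"
    using assms by (auto intro!: nn_integral_cong simp: ennreal_mult[symmetric])
  also have "\<dots> = (\<integral>\<^sup>+x. ennreal (if x = i then t else 1) * ennreal ((1 - pmf p i + pmf p i * t) ^ N) \<partial>p)"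
    by (simp add: nn_integral_cmult Suc)
  also have "\<dots> = ennreal (1 - pmf p i + pmf p i * t) * ennreal ((1 - pmf p i + pmf p i * t) ^ N)"
    using assms by (simp add: nn_integral_multc nn_ind_pt)
  also have "\<dots> = ennreal ((1 - pmf p i + pmf p i * t) ^ Suc N)"
  proof -
    have "0 \<le> 1 - pmf p i + pmf p i * t" using assms pmf_le_1[of p i] by (simp add: add_nonneg_nonneg)
    then show ?thesis by (simp only: ennreal_mult[symmetric] zero_le_power power_Suc)
  qed
  finally show ?case .
qed

lemma mgf_poi:
  assumes "t \<ge> 0" "m > 0"
  shows "(\<integral>\<^sup>+ xs. ennreal (t ^ count_list xs i) \<partial>poi_samples m p) = ennreal (exp (m * pmf p i * (t - 1)))"
proof -
  define a where "a = 1 - pmf p i + pmf p i * t"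
  have a0: "a \<ge> 0" using assms pmf_le_1[of p i] by (simp add: a_def add_nonneg_nonneg)
  have sums: "(\<lambda>N. (m * a) ^ N / fact N * exp (-m)) sums (exp (m * a) * exp (-m))"
    using sums_mult2[OF exp_converges[of "m * a"], of "exp (-m)"] by (simp add: divide_inverse mult.commute)
  have "(\<integral>\<^sup>+ xs. ennreal (t ^ count_list xs i) \<partial>poi_samples m p)
      = (\<integral>\<^sup>+ N. ennreal (a ^ N) \<partial>poisson_pmf m)"
    unfolding poi_samples_def a_def using assms by (simp add: mgf_rep)
  also have "\<dots> = (\<integral>\<^sup>+ N. ennreal ((m * a) ^ N / fact N * exp (-m)) \<partial>count_space UNIV)"
    unfolding nn_integral_measure_pmf using assms a0
    by (intro nn_integral_cong) (simp add: ennreal_mult[symmetric] power_mult_distrib)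
  also have "\<dots> = ennreal (\<Sum>N. (m * a) ^ N / fact N * exp (-m))"
    unfolding nn_integral_count_space_nat using sums a0 assms
    by (intro suminf_ennreal2) (auto simp: sums_summable)
  also have "\<dots> = ennreal (exp (m * a) * exp (-m))" using sums sums_unique by metis
  also have "exp (m * a) * exp (-m) = exp (m * pmf p i * (t - 1))"
    by (simp add: a_def mult_exp_exp algebra_simps)
  finally show ?thesis .
qed

lemma upper_tail:
  assumes "m > 0" "2 * m * pmf p i \<le> c"
  shows "measure_pmf.prob (poi_samples m p) {S. c \<le> real (count_list S i)} \<le> exp (-(ln 2 - 1/2) * c)"
proof -
  have "emeasure (measure_pmf (poi_samples m p)) {S. c \<le> real (count_list S i)}
      = (\<integral>\<^sup>+ S. indicator {S. c \<le> real (count_list S i)} S \<partial>poi_samples m p)" by simp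
  also have "\<dots> \<le> (\<integral>\<^sup>+ S. ennreal (1 / 2 powr c) * ennreal (2 ^ count_list S i) \<partial>poi_samples m p)"
  proof (intro nn_integral_mono)
    fix S
    show "indicator {S. c \<le> real (count_list S i)} S \<le> ennreal (1 / 2 powr c) * ennreal (2 ^ count_list S i)"
    proof (cases "c \<le> real (count_list S i)")
      case True
      have "2 powr c \<le> 2 powr real (count_list S i)" using True by simp
      hence "2 powr c \<le> 2 ^ count_list S i" by (simp add: powr_realpow)
      hence "1 \<le> 1 / 2 powr c * 2 ^ count_list S i" by (simp add: field_simps)
      then show ?thesis using True by (simp add: ennreal_mult[symmetric])
    qed simp
  qed
  also have "\<dots> = ennreal (1 / 2 powr c) * ennreal (exp (m * pmf p i * (2 - 1)))"
    using assms by (simp add: nn_integral_cmult mgf_poi)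
  also have "\<dots> = ennreal (exp (m * pmf p i) / 2 powr c)" by (simp add: ennreal_mult[symmetric])
  finally have "measure_pmf.prob (poi_samples m p) {S. c \<le> real (count_list S i)} \<le> exp (m * pmf p i) / 2 powr c"
    by (simp add: measure_pmf.emeasure_eq_measure ennreal_le_iff)
  also have "\<dots> = exp (m * pmf p i - c * ln 2)" by (simp add: powr_def exp_diff)
  also have "\<dots> \<le> exp (-(ln 2 - 1/2) * c)" using assms by (simp add: algebra_simps)
  finally show ?thesis .
qed

lemma lower_tail:
  assumes "m > 0" "2 * c \<le> m * pmf p i"
  shows "measure_pmf.prob (poi_samples m p) {S. real (count_list S i) \<le> c} \<le> exp (-(1 - ln 2) * c)"
proof -
  have "emeasure (measure_pmf (poi_samples m p)) {S. real (count_list S i) \<le> c}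
      = (\<integral>\<^sup>+ S. indicator {S. real (count_list S i) \<le> c} S \<partial>poi_samples m p)" by simp
  also have "\<dots> \<le> (\<integral>\<^sup>+ S. ennreal (2 powr c) * ennreal ((1/2) ^ count_list S i) \<partial>poi_samples m p)"
  proof (intro nn_integral_mono)
    fix S
    show "indicator {S. real (count_list S i) \<le> c} S \<le> ennreal (2 powr c) * ennreal ((1/2) ^ count_list S i)"
    proof (cases "real (count_list S i) \<le> c")
      case True
      have "2 powr real (count_list S i) \<le> 2 powr c" using True by simp
      hence "2 ^ count_list S i \<le> 2 powr c" by (simp add: powr_realpow)
      hence "1 \<le> 2 powr c * (1/2) ^ count_list S i" by (simp add: field_simps)
      then show ?thesis using True by (simp add: ennreal_mult[symmetric])
    qed simp
  qed
  also have "\<dots> = ennreal (2 powr c) * ennreal (exp (m * pmf p i * (1/2 - 1)))"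
    using assms by (simp add: nn_integral_cmult mgf_poi)
  also have "\<dots> = ennreal (2 powr c * exp (m * pmf p i * (1/2 - 1)))" by (simp add: ennreal_mult[symmetric])
  finally have "measure_pmf.prob (poi_samples m p) {S. real (count_list S i) \<le> c} \<le> 2 powr c * exp (m * pmf p i * (1/2 - 1))"
    by (simp add: measure_pmf.emeasure_eq_measure ennreal_le_iff)
  also have "\<dots> = exp (c * ln 2 - m * pmf p i / 2)" by (simp add: powr_def mult_exp_exp)
  also have "\<dots> \<le> exp (-(1 - ln 2) * c)" using assms by (simp add: algebra_simps)
  finally show ?thesis .
qed

lemma prob_fst_event:
  assumes "C \<Longrightarrow> measure_pmf.prob A {S. \<Phi> S} \<le> r" "0 \<le> r"
  shows "measure_pmf.prob (pair_pmf A B) {x. C \<and> \<Phi> (fst x)} \<le> r"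
proof (cases C)
  case True
  have e: "{x. C \<and> \<Phi> (fst x)} = fst -` {S. \<Phi> S}" using True by auto
  have "measure_pmf.prob (pair_pmf A B) {x. C \<and> \<Phi> (fst x)} = measure_pmf.prob (map_pmf fst (pair_pmf A B)) {S. \<Phi> S}"
    by (simp only: measure_map_pmf e)
  then show ?thesis using assms True by (simp add: map_fst_pair_pmf)
qed (use assms in simp)

lemma prob_snd_event:
  assumes "C \<Longrightarrow> measure_pmf.prob B {S. \<Phi> S} \<le> r" "0 \<le> r"
  shows "measure_pmf.prob (pair_pmf A B) {x. C \<and> \<Phi> (snd x)} \<le> r"
proof (cases C)
  case True
  have e: "{x. C \<and> \<Phi> (snd x)} = snd -` {S. \<Phi> S}" using True by auto
  have "measure_pmf.prob (pair_pmf A B) {x. C \<and> \<Phi> (snd x)} = measure_pmf.prob (map_pmf snd (pair_pmf A B)) {S. \<Phi> S}"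
    by (simp only: measure_map_pmf e)
  then show ?thesis using assms True by (simp add: map_snd_pair_pmf)
qed (use assms in simp)

lemma un2:
  "measure_pmf.prob M A \<le> a \<Longrightarrow> measure_pmf.prob M B \<le> b \<Longrightarrow> measure_pmf.prob M (A \<union> B) \<le> a + b"
  using measure_Un_le[of A "measure_pmf M" B] by simp

lemma ln2_bounds: "2/3 \<le> ln (2::real)" "ln (2::real) \<le> 5/6"
proof -
  show "2/3 \<le> ln (2::real)" by (rule ln2_ge_two_thirds)
  have "ln (2::real) = ln (3/2) + ln (4/3)" using ln_mult[of "3/2::real" "4/3"] by simp
  also have "\<dots> \<le> (3/2 - 1) + (4/3 - 1)" by (intro add_mono ln_le_minus_one) auto
  finally show "ln (2::real) \<le> 5/6" by simp
qed

lemma tail_small: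
  fixes k L c :: real
  assumes "k \<ge> 1/6" "256 * L \<le> c" "0 \<le> L"
  shows "exp (-k * c) \<le> exp (- 3 * L)"
proof -
  have "3 * L \<le> k * c"
  proof -
    have "3 * L \<le> (1/6) * (256 * L)" using assms by simp
    also have "\<dots> \<le> k * c" using assms by (intro mult_mono) auto
    finally show ?thesis .
  qed
  then show ?thesis by simp
qed

lemma up_div:
  assumes "m > 0" "2 * pmf p i \<le> a" "256 * L \<le> m * a" "0 \<le> L"
  shows "measure_pmf.prob (poi_samples m p) {S. a \<le> real (count_list S i) / m} \<le> exp (- 3 * L)"
proof -
  have "{S. a \<le> real (count_list S i) / m} = {S. m * a \<le> real (count_list S i)}"
    using assms(1) by (auto simp: pos_le_divide_eq mult.commute)
  moreover have "measure_pmf.prob (poi_samples m p) {S. m * a \<le> real (count_list S i)} \<le> exp (-(ln 2 - 1/2) * (m * a))"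
    using assms by (intro upper_tail) (auto simp: mult_left_mono)
  moreover have "exp (-(ln 2 - 1/2) * (m * a)) \<le> exp (- 3 * L)"
    using assms ln2_bounds by (intro tail_small) auto
  ultimately show ?thesis by (metis (no_types, lifting) order_trans)
qed

lemma low_div:
  assumes "m > 0" "2 * a \<le> pmf p i" "256 * L \<le> m * a" "0 \<le> L"
  shows "measure_pmf.prob (poi_samples m p) {S. real (count_list S i) / m \<le> a} \<le> exp (- 3 * L)"
proof -
  have "{S. real (count_list S i) / m \<le> a} = {S. real (count_list S i) \<le> m * a}"
    using assms(1) by (auto simp: pos_divide_le_eq mult.commute)
  moreover have "measure_pmf.prob (poi_samples m p) {S. real (count_list S i) \<le> m * a} \<le> exp (-(1 - ln 2) * (m * a))"
    using assms by (intro lower_tail) (auto simp: mult_left_mono)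
  moreover have "exp (-(1 - ln 2) * (m * a)) \<le> exp (- 3 * L)"
    using assms ln2_bounds by (intro tail_small) auto
  ultimately show ?thesis by (metis (no_types, lifting) order_trans)
qed

lemma logicH: fixes b b' X Y P Q :: real shows
 "\<not> b < X \<Longrightarrow> \<not> b < Y \<Longrightarrow> \<not> (b' \<le> max X Y \<and> max X Y \<le> b) \<Longrightarrow> \<not>(2*b' \<le> P \<and> X \<le> b') \<Longrightarrow> \<not>(2*b' \<le> Q \<and> Y \<le> b') \<Longrightarrow> P < 2*b' \<and> Q < 2*b'"
  by (auto simp: max_def split: if_splits)
lemma logicM: fixes b b' X Y P Q :: real shows
 "b' \<le> max X Y \<Longrightarrow> max X Y \<le> b \<Longrightarrow>
  \<not>(P < b'/2 \<and> b' \<le> X) \<Longrightarrow> \<not>(Q < b'/2 \<and> b' \<le> Y) \<Longrightarrow>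
  \<not>(2*b < P \<and> X \<le> b) \<Longrightarrow> \<not>(2*b < Q \<and> Y \<le> b) \<Longrightarrow>
  b' / 2 \<le> max P Q \<and> max P Q \<le> 2 * b"
  by (auto simp: max_def split: if_splits)
lemma logicB: fixes b X Y P Q :: real shows
 "b < X \<or> b < Y \<Longrightarrow> \<not>(P \<le> b/2 \<and> b \<le> X) \<Longrightarrow> \<not>(Q \<le> b/2 \<and> b \<le> Y) \<Longrightarrow> b/2 < P \<or> b/2 < Q"
  by auto

theorem lemma7:
  "\<exists>f :: nat \<Rightarrow> real. (\<lambda>n. real n * f n) \<longlonglongrightarrow> 0 \<and>
     (\<forall>n p q \<epsilon> m1 m2. distr_on n p \<longrightarrow> distr_on n q \<longrightarrow> 0 < \<epsilon> \<longrightarrow> \<epsilon> \<le> 1 \<longrightarrow>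
        m1 \<ge> m2 \<longrightarrow> m2 > 0 \<longrightarrow>
        measure_pmf.prob (pair_pmf (poi_samples m1 p) (poi_samples m2 q))
          {(S, T). B_faithful p q (thr_b n \<epsilon> m2) (setB n \<epsilon> m1 m2 S T)
                 \<and> M_faithful p q (thr_b n \<epsilon> m2) (thr_b' n m2) (setM n \<epsilon> m1 m2 S T)
                 \<and> H_faithful p q (thr_b' n m2) (setH n \<epsilon> m1 m2 S T)}
          \<ge> 1 - f n)"
proof -
  define f :: "nat \<Rightarrow> real" where "f n = 8 / (real n)^2" for n
  have lim: "(\<lambda>n. real n * f n) \<longlonglongrightarrow> 0"
  proof -
    have "(\<lambda>n. real n * f n) = (\<lambda>n. 8 * inverse (real n))"
      by (auto simp: f_def fun_eq_iff power2_eq_square field_simps)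
    moreover have "(\<lambda>n. 8 * inverse (real n)) \<longlonglongrightarrow> 0"
      by (intro tendsto_mult_right_zero lim_inverse_n)
    ultimately show ?thesis by simp
  qed
  have main: "measure_pmf.prob (pair_pmf (poi_samples m1 p) (poi_samples m2 q))
          {(S, T). B_faithful p q (thr_b n \<epsilon> m2) (setB n \<epsilon> m1 m2 S T)
                 \<and> M_faithful p q (thr_b n \<epsilon> m2) (thr_b' n m2) (setM n \<epsilon> m1 m2 S T)
                 \<and> H_faithful p q (thr_b' n m2) (setH n \<epsilon> m1 m2 S T)}
          \<ge> 1 - f n"
    if dp: "distr_on n p" and dq: "distr_on n q" and e0: "0 < \<epsilon>" and e1: "\<epsilon> \<le> 1"
      and m12: "m1 \<ge> m2" and m2p: "m2 > 0" for n p q \<epsilon> m1 m2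
  proof -
    let ?M = "pair_pmf (poi_samples m1 p) (poi_samples m2 q)"
    define G where "G = {(S, T). B_faithful p q (thr_b n \<epsilon> m2) (setB n \<epsilon> m1 m2 S T)
                 \<and> M_faithful p q (thr_b n \<epsilon> m2) (thr_b' n m2) (setM n \<epsilon> m1 m2 S T)
                 \<and> H_faithful p q (thr_b' n m2) (setH n \<epsilon> m1 m2 S T)}"
    have "n \<noteq> 0"
    proof
      assume "n = 0"
      then have "set_pmf p = {}" using dp by (auto simp: distr_on_def)
      then show False using set_pmf_not_empty by blast
    qed
    show ?thesis
    proof (cases "n = 1")
      case True
      have "0 \<le> measure_pmf.prob ?M G" by simp
      moreover have "1 - f n \<le> 0" using True by (simp add: f_def)
      ultimately show ?thesis unfolding G_def by linarith
    next
      case False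
      with \<open>n \<noteq> 0\<close> have n2: "n \<ge> 2" by linarith
      define L where "L = ln (real n)"
      have L0: "0 < L" using n2 by (simp add: L_def)
      define b where "b = thr_b n \<epsilon> m2"
      define b' where "b' = thr_b' n m2"
      have m1p: "m1 > 0" using m12 m2p by linarith
      have m2b: "256 * L \<le> m2 * b"
      proof -
        have "m2 * b = 256 * L / \<epsilon>\<^sup>2" using m2p by (simp add: b_def thr_b_def L_def)
        moreover have "\<epsilon>\<^sup>2 \<le> 1" using e0 e1 by (simp add: power_le_one)
        moreover have "\<epsilon>\<^sup>2 > 0" using e0 by simp
        ultimately show ?thesis using L0 by (simp add: le_divide_eq)
      qed
      have bpos: "b \<ge> 0" unfolding b_def thr_b_def L_def[symmetric] using L0 e0 m2p
        by (intro divide_nonneg_pos) auto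
      have m1b: "256 * L \<le> m1 * b" using m2b m12 bpos by (meson mult_right_mono order_trans)
      have m2b': "256 * L \<le> m2 * b'" using m2p by (simp add: b'_def thr_b'_def L_def)
      have bpos': "b' \<ge> 0" unfolding b'_def thr_b'_def L_def[symmetric] using L0 m2p
        by (intro divide_nonneg_pos) auto
      have m1b': "256 * L \<le> m1 * b'" using m2b' m12 bpos' by (meson mult_right_mono order_trans)
      define r where "r = exp (- 3 * L)"
      have r0: "r \<ge> 0" by (simp add: r_def)
      define E where "E i = {x. pmf p i \<le> b/2 \<and> b \<le> real (count_list (fst x) i) / m1}
        \<union> {x. pmf q i \<le> b/2 \<and> b \<le> real (count_list (snd x) i) / m2}
        \<union> {x. pmf p i < b'/2 \<and> b' \<le> real (count_list (fst x) i) / m1}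
        \<union> {x. pmf q i < b'/2 \<and> b' \<le> real (count_list (snd x) i) / m2}
        \<union> {x. 2*b < pmf p i \<and> real (count_list (fst x) i) / m1 \<le> b}
        \<union> {x. 2*b < pmf q i \<and> real (count_list (snd x) i) / m2 \<le> b}
        \<union> {x. 2*b' \<le> pmf p i \<and> real (count_list (fst x) i) / m1 \<le> b'}
        \<union> {x. 2*b' \<le> pmf q i \<and> real (count_list (snd x) i) / m2 \<le> b'}" for i
      have Eb: "measure_pmf.prob ?M (E i) \<le> 8 * r" for i
      proof -
        have "measure_pmf.prob ?M (E i) \<le> r + r + r + r + r + r + r + r"
          unfolding E_def r_def
          by (intro un2 prob_fst_event prob_snd_event up_div low_div)
             (use m1p m2p m1b m2b m1b' m2b' L0 in auto)
        then show ?thesis by simp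
      qed
      have sub: "UNIV - G \<subseteq> (\<Union>i\<in>{1..n}. E i)"
      proof
        fix x assume x: "x \<in> UNIV - G"
        obtain S T where xST: "x = (S, T)" by (cases x)
        show "x \<in> (\<Union>i\<in>{1..n}. E i)"
        proof (rule ccontr)
          assume nE: "x \<notin> (\<Union>i\<in>{1..n}. E i)"
          have nEi: "(S,T) \<notin> E i" if "i \<in> {1..n}" for i using nE that xST by blast
          have nEs: "\<not>(pmf p i \<le> b/2 \<and> b \<le> real (count_list S i) / m1)
            \<and> \<not>(pmf q i \<le> b/2 \<and> b \<le> real (count_list T i) / m2)
            \<and> \<not>(pmf p i < b'/2 \<and> b' \<le> real (count_list S i) / m1)
            \<and> \<not>(pmf q i < b'/2 \<and> b' \<le> real (count_list T i) / m2)
            \<and> \<not>(2*b < pmf p i \<and> real (count_list S i) / m1 \<le> b)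
            \<and> \<not>(2*b < pmf q i \<and> real (count_list T i) / m2 \<le> b)
            \<and> \<not>(2*b' \<le> pmf p i \<and> real (count_list S i) / m1 \<le> b')
            \<and> \<not>(2*b' \<le> pmf q i \<and> real (count_list T i) / m2 \<le> b')" if "i \<in> {1..n}" for i
            using nEi[OF that] unfolding E_def by simp
          have "B_faithful p q b (setB n \<epsilon> m1 m2 S T)"
            unfolding B_faithful_def setB_def b_def[symmetric]
          proof
            fix i assume i: "i \<in> {i \<in> {1..n}. b < real (count_list S i) / m1} \<union> {i \<in> {1..n}. b < real (count_list T i) / m2}"
            then have "i \<in> {1..n}" by auto
            from nEs[OF this] i show "b / 2 < pmf p i \<or> b / 2 < pmf q i"
              by (intro logicB) auto
          qed
          moreover have "M_faithful p q b b' (setM n \<epsilon> m1 m2 S T)"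
            unfolding M_faithful_def setM_def b_def[symmetric] b'_def[symmetric]
          proof
            fix i assume i: "i \<in> {i \<in> {1..n}. b' \<le> max (real (count_list S i) / m1) (real (count_list T i) / m2)
                 \<and> max (real (count_list S i) / m1) (real (count_list T i) / m2) \<le> b}"
            then have "i \<in> {1..n}" by auto
            from nEs[OF this] i show "b' / 2 \<le> max (pmf p i) (pmf q i) \<and> max (pmf p i) (pmf q i) \<le> 2 * b"
              by (intro logicM) auto
          qed
          moreover have "H_faithful p q b' (setH n \<epsilon> m1 m2 S T)"
            unfolding H_faithful_def setH_def setM_def setB_def b_def[symmetric] b'_def[symmetric]
          proof
            fix i assume i: "i \<in> {1..n} - ({i \<in> {1..n}. b < real (count_list S i) / m1} \<union> {i \<in> {1..n}. b < real (count_list T i) / m2} \<union>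
                 {i \<in> {1..n}. b' \<le> max (real (count_list S i) / m1) (real (count_list T i) / m2)
                 \<and> max (real (count_list S i) / m1) (real (count_list T i) / m2) \<le> b})"
            have i1: "i \<in> {1..n}" using i by simp
            have h1: "\<not> b < real (count_list S i) / m1" using i by simp
            have h2: "\<not> b < real (count_list T i) / m2" using i by simp
            have h3: "\<not> (b' \<le> max (real (count_list S i) / m1) (real (count_list T i) / m2)
                 \<and> max (real (count_list S i) / m1) (real (count_list T i) / m2) \<le> b)" using i by simp
            show "pmf p i < 2 * b' \<and> pmf q i < 2 * b'"
              by (rule logicH[OF h1 h2 h3]) (use nEs[OF i1] in blast)+
          qed
          ultimately have "x \<in> G" unfolding G_def xST b_def b'_def by simp
          with x show False by simp
        qed
      qed
      have "measure_pmf.prob ?M (UNIV - G) \<le> measure_pmf.prob ?M (\<Union>i\<in>{1..n}. E i)"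
        using sub by (intro measure_pmf.finite_measure_mono) auto
      also have "\<dots> \<le> (\<Sum>i\<in>{1..n}. measure_pmf.prob ?M (E i))"
        by (intro measure_subadditive_finite) auto
      also have "\<dots> \<le> (\<Sum>i\<in>{1..n}. 8 * r)" by (intro sum_mono Eb)
      also have "\<dots> = real n * 8 * r" by simp
      also have "r = 1 / real n ^ 3"
      proof -
        have "ln (real n ^ 3) = 3 * L" using ln_realpow[of "real n" 3] n2 by (simp add: L_def)
        then have "exp (3 * L) = real n ^ 3" using n2 by (metis exp_ln of_nat_0_less_iff zero_less_power
            less_le_trans zero_less_numeral)
        then show ?thesis by (simp add: r_def exp_minus divide_inverse)
      qed
      also have "real n * 8 * (1 / real n ^ 3) = f n"
        using n2 by (simp add: f_def power2_eq_square power3_eq_cube field_simps)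
      finally have "measure_pmf.prob ?M (UNIV - G) \<le> f n" .
      moreover have "measure_pmf.prob ?M (UNIV - G) = 1 - measure_pmf.prob ?M G"
        using measure_pmf.prob_compl[of G ?M] by simp
      ultimately show ?thesis unfolding G_def by simp
    qed
  qed
  show ?thesis using lim main by blast
qed

end
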